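(* Let $\mathbf x=(k,S,\Lambda)$ be a combinatorial $k$-parameter with $S$ a set of ordinals, and let $F$ be a regressive function on $\mathbf x$ which is finitary or simple. Then $(\mathbf x,F)$ is $\aleph_{k+1}$-free, i.e. every $\Lambda'\subseteq\Lambda$ with $|\Lambda'|\le\aleph_k$ is free for $(\mathbf x,F)$.
   Context: For a set $S$, ${}^\omega S$ is the set of functions $\omega\to S$. A combinatorial $k$-parameter is $(k,S,\Lambda)$ with $k<\omega$, $S$ a set, $\Lambda\subseteq{}^{k+1}({}^\omega S)$ (sequences $\bar\eta=\langle\eta_0,\dots,\eta_k\rangle$, $\eta_\ell\in{}^\omega S$). For $\bar\eta\in\Lambda$, $m\le k$, $n<\omega$, $\bar\eta\upharpoonleft\langle m,n\rangle$ is the sequence obtained from $\bar\eta$ by replacing $\eta_m$ with $\eta_m\restriction n$; $\Lambda_m=\{\bar\eta\upharpoonleft\langle m,n\rangle:\bar\eta\in\Lambda,n<\omega\}$, $\Lambda_{\le k}=\bigcup_{m\le k}\Lambda_m$. A function $F$ is regressive on $\mathbf x$ if: $\mathrm{dom}(F)=\Lambda$; each $F(\bar\eta)$ is a countable subset of $\Lambda\cup\Lambda_{\le k}$; and for every $\bar\eta\in\Lambda$ and $\ell\le k$, $\sup\mathrm{Rang}(\eta_\ell)>\sup\bigcup\{\mathrm{Rang}(\nu_\ell):\bar\nu\in F(\bar\eta)\}$. $F$ is finitary if each $F(\bar\eta)$ is finite, and simple if $F(\bar\eta)$ depends only on $\eta_k(0)$. A set $\Lambda'\subseteq\Lambda$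 is free for $(\mathbf x,F)$ if there are an enumeration $\langle\bar\eta^\alpha:\alpha<\alpha( * )\rangle$ of $\Lambda''=\Lambda'\cup\bigcup\{F(\bar\eta):\bar\eta\in\Lambda'\}$ and $\ell_\alpha\le k$ ($\alpha<\alpha( * )$) such that for every $\alpha<\alpha( * )$ with $\bar\eta^\alpha\in\Lambda'$: (i) $F(\bar\eta^\alpha)\subseteq\{\bar\eta^\beta,\ \bar\eta^\beta\upharpoonleft\langle m,n\rangle:\beta<\alpha,m\le k,n<\omega\}$, and (ii) for some $n<\omega$, $\bar\eta^\alpha\upharpoonleft\langle\ell_\alpha,n\rangle\notin\{\bar\eta^\beta\upharpoonleft\langle\ell_\alpha,n\rangle:\beta<\alpha,\ \bar\eta^\beta\in\Lambda'\}\cup\{\bar\eta^\beta:\beta<\alpha\}$. $(\mathbf x,F)$ is $\theta$-free if every $\Lambda'\subseteq\Lambda$ of cardinality $<\theta$ is free for $(\mathbf x,F)$. *)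

theory Defs
  imports Main "HOL-Library.Countable_Set"
begin

text \<open>Sequences in S: either finite (Inl, a list = a function n -> S)
  or of length omega (Inr, a function nat -> S).\<close>
type_synonym 'a seq = "'a list + (nat \<Rightarrow> 'a)"

fun rng :: "'a seq \<Rightarrow> 'a set" where
  "rng (Inl xs) = set xs"
| "rng (Inr f) = range f"

fun trunc :: "'a seq \<Rightarrow> nat \<Rightarrow> 'a seq" where
  "trunc (Inl xs) n = Inl (take n xs)"
| "trunc (Inr f) n = Inl (map f [0..<n])"

fun first :: "'a seq \<Rightarrow> 'a" where
  "first (Inr f) = f 0"
| "first (Inl xs) = hd xs"

text \<open>Tuples eta = <eta_0,...,eta_k> are lists of length k+1.
  restr eta m n is eta restricted at <m,n>: eta_m replaced by eta_m|n.\<close>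
definition restr :: "'a seq list \<Rightarrow> nat \<Rightarrow> nat \<Rightarrow> 'a seq list" where
  "restr eta m n = eta[m := trunc (eta ! m) n]"

definition comb_param :: "nat \<Rightarrow> 'a set \<Rightarrow> 'a seq list set \<Rightarrow> bool" where
  "comb_param k S Lam \<longleftrightarrow>
     (\<forall>eta\<in>Lam. length eta = Suc k \<and> (\<forall>l\<le>k. \<exists>f. eta ! l = Inr f \<and> range f \<subseteq> S))"

definition Lam_m :: "'a seq list set \<Rightarrow> nat \<Rightarrow> 'a seq list set" where
  "Lam_m Lam m = {restr eta m n | eta n. eta \<in> Lam}"

definition Lam_le :: "nat \<Rightarrow> 'a seq list set \<Rightarrow> 'a seq list set" where
  "Lam_le k Lam = (\<Union>m\<le>k. Lam_m Lam m)"

definition regressive ::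
  "nat \<Rightarrow> ('a::complete_lattice) seq list set \<Rightarrow> ('a seq list \<Rightarrow> 'a seq list set) \<Rightarrow> bool" where
  "regressive k Lam F \<longleftrightarrow>
     (\<forall>eta\<in>Lam. countable (F eta) \<and> F eta \<subseteq> Lam \<union> Lam_le k Lam \<and>
        (\<forall>l\<le>k. Sup (\<Union>nu\<in>F eta. rng (nu ! l)) < Sup (rng (eta ! l))))"

definition finitary :: "'a seq list set \<Rightarrow> ('a seq list \<Rightarrow> 'a seq list set) \<Rightarrow> bool" where
  "finitary Lam F \<longleftrightarrow> (\<forall>eta\<in>Lam. finite (F eta))"

definition simple :: "nat \<Rightarrow> 'a seq list set \<Rightarrow> ('a seq list \<Rightarrow> 'a seq list set) \<Rightarrow> bool" where
  "simple k Lam F \<longleftrightarrow>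
     (\<forall>eta\<in>Lam. \<forall>nu\<in>Lam. first (eta ! k) = first (nu ! k) \<longrightarrow> F eta = F nu)"

text \<open>The enumeration <eta^alpha : alpha < alpha(*)> of Lam'' is given as a
  well-order r with field Lam'' (beta < alpha iff (nu,eta) in r, nu ~= eta); the
  index l_alpha is given as a function ell of the enumerated element.\<close>
definition free_for ::
  "nat \<Rightarrow> 'a seq list set \<Rightarrow> ('a seq list \<Rightarrow> 'a seq list set) \<Rightarrow> 'a seq list set \<Rightarrow> bool" where
  "free_for k Lam F Lam' \<longleftrightarrow>
     (\<exists>r ell. Well_order r \<and> Field r = Lam' \<union> (\<Union>eta\<in>Lam'. F eta) \<and>
        (\<forall>eta\<in>Field r. ell eta \<le> k) \<and>
        (\<forall>eta\<in>Lam'.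
           F eta \<subseteq> {nu. (nu, eta) \<in> r \<and> nu \<noteq> eta}
                    \<union> {restr nu m n | nu m n. (nu, eta) \<in> r \<and> nu \<noteq> eta \<and> m \<le> k} \<and>
           (\<exists>n. restr eta (ell eta) n \<notin>
                  {restr nu (ell eta) n | nu. (nu, eta) \<in> r \<and> nu \<noteq> eta \<and> nu \<in> Lam'}
                  \<union> {nu. (nu, eta) \<in> r \<and> nu \<noteq> eta})))"

text \<open>le_aleph k A: |A| <= aleph_k, with aleph_0 = natLeq and aleph_(k+1) = cardSuc aleph_k.\<close>
fun le_aleph :: "nat \<Rightarrow> 'a set \<Rightarrow> bool" where
  "le_aleph 0 A = ((card_of A, natLeq) \<in> ordLeq)"
| "le_aleph (Suc k) A = (\<exists>B. le_aleph k B \<and> (card_of A, cardSuc (card_of B)) \<in> ordLeq)"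

end

theory Submission
  imports Defs "HOL-Library.Product_Lexorder" "HOL-Library.Countable_Set_Type"
begin

definition lexR :: "'i rel \<Rightarrow> ('x \<Rightarrow> 'i) \<Rightarrow> ('i \<Rightarrow> 'x rel) \<Rightarrow> 'x set \<Rightarrow> 'x rel" where
  "lexR W f Q A = {(x,y). x \<in> A \<and> y \<in> A \<and>
     ((f x, f y) \<in> W \<and> f x \<noteq> f y \<or> f x = f y \<and> (x,y) \<in> Q (f x))}"

lemma wo_least:
  assumes "Well_order r" "B \<subseteq> Field r" "B \<noteq> {}"
  shows "\<exists>a\<in>B. \<forall>a'\<in>B. (a, a') \<in> r"
  using assms Linear_order_Well_order_iff[of r] unfolding well_order_on_def by blast

lemma wo_lex:
  assumes W: "Well_order W" and f: "\<forall>x\<in>A. f x \<in> Field W"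
    and Q: "\<forall>a\<in>Field W. Well_order (Q a) \<and> Field (Q a) = {x\<in>A. f x = a}"
  shows "Well_order (lexR W f Q A) \<and> Field (lexR W f Q A) = A"
proof -
  let ?R = "lexR W f Q A"
  have QA: "\<And>x. x \<in> A \<Longrightarrow> x \<in> Field (Q (f x))" using Q f by auto
  have Qrefl: "\<And>x. x \<in> A \<Longrightarrow> (x,x) \<in> Q (f x)"
    using QA Q f by (meson refl_onD linear_order_on_def partial_order_on_def preorder_on_def well_order_on_def)
  have Fld: "Field ?R = A"
  proof
    show "Field ?R \<subseteq> A" unfolding lexR_def Field_def by auto
    show "A \<subseteq> Field ?R" using Qrefl unfolding lexR_def Field_def by auto
  qed
  have Wlin: "Linear_order W" using W unfolding well_order_on_def by blast
  have Qlin: "\<And>a. a \<in> Field W \<Longrightarrow> Linear_order (Q a)" using Q unfolding well_order_on_def by blast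
  have lin: "Linear_order ?R"
    unfolding Fld
    unfolding linear_order_on_def partial_order_on_def preorder_on_def
  proof (intro conjI)
    show "?R \<subseteq> A \<times> A" unfolding lexR_def by auto
    show "refl_on A ?R" unfolding refl_on_def lexR_def using Qrefl by auto
    show "trans ?R"
    proof (rule transI)
      fix x y z assume xy: "(x,y) \<in> ?R" and yz: "(y,z) \<in> ?R"
      have A: "x \<in> A" "y \<in> A" "z \<in> A" using xy yz unfolding lexR_def by auto
      have tW: "trans W" and aW: "antisym W" using Wlin unfolding linear_order_on_def partial_order_on_def preorder_on_def by auto
      have tQ: "trans (Q (f x))" using Qlin[of "f x"] f A unfolding linear_order_on_def partial_order_on_def preorder_on_def by auto
      show "(x,z) \<in> ?R"
      proof (cases "f x = f y")
        case True
        then show ?thesis using xy yz A tQ unfolding lexR_def by (auto dest: transD)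
      next
        case False
        then have "(f x, f y) \<in> W" using xy unfolding lexR_def by auto
        moreover have "(f y, f z) \<in> W" using yz Qrefl A Wlin f
          unfolding lexR_def linear_order_on_def partial_order_on_def preorder_on_def refl_on_def by auto
        ultimately have "(f x, f z) \<in> W" using tW by (auto dest: transD)
        moreover have "f x \<noteq> f z"
        proof
          assume "f x = f z"
          then have "(f y, f x) \<in> W" using \<open>(f y, f z) \<in> W\<close> by simp
          then show False using \<open>(f x, f y) \<in> W\<close> False aW by (auto dest: antisymD)
        qed
        ultimately show ?thesis using A unfolding lexR_def by auto
      qed
    qed
    show "antisym ?R"
    proof (rule antisymI)
      fix x y assume xy: "(x,y) \<in> ?R" and yx: "(y,x) \<in> ?R"
      have A: "x \<in> A" "y \<in> A" using xy unfolding lexR_def by auto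
      have aW: "antisym W" using Wlin unfolding linear_order_on_def partial_order_on_def by auto
      have aQ: "antisym (Q (f x))" using Qlin[of "f x"] f A unfolding linear_order_on_def partial_order_on_def by auto
      show "x = y"
      proof (cases "f x = f y")
        case True
        then have "(x,y) \<in> Q (f x)" "(y,x) \<in> Q (f x)" using xy yx unfolding lexR_def by auto
        then show ?thesis using aQ by (meson antisymD)
      next
        case False
        then have "(f x, f y) \<in> W" "(f y, f x) \<in> W" using xy yx unfolding lexR_def by auto
        then show ?thesis using aW False by (meson antisymD)
      qed
    qed
    show "total_on A ?R"
    proof (rule total_onI)
      fix x y assume A: "x \<in> A" "y \<in> A" "x \<noteq> y"
      show "(x,y) \<in> ?R \<or> (y,x) \<in> ?R"
      proof (cases "f x = f y")
        case True
        have "x \<in> Field (Q (f x))" "y \<in> Field (Q (f x))" using QA[of x] QA[of y] A True by auto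
        then have "(x,y) \<in> Q (f x) \<or> (y,x) \<in> Q (f x)" using Qlin[of "f x"] f A
          unfolding linear_order_on_def total_on_def by auto
        then show ?thesis using True A unfolding lexR_def by auto
      next
        case False
        then have "(f x, f y) \<in> W \<or> (f y, f x) \<in> W" using Wlin f A
          unfolding linear_order_on_def total_on_def by auto
        then show ?thesis using False A unfolding lexR_def by auto
      qed
    qed
  qed
  have "Well_order ?R"
  proof (subst Linear_order_Well_order_iff[OF lin], intro allI impI)
    fix B assume B: "B \<subseteq> Field ?R" "B \<noteq> {}"
    then have BA: "B \<subseteq> A" using Fld by simp
    obtain a where a: "a \<in> f ` B" "\<forall>a'\<in> f ` B. (a,a') \<in> W"
      using wo_least[OF W, of "f ` B"] B BA f by blast
    let ?B = "{x\<in>B. f x = a}"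
    have aF: "a \<in> Field W" using a BA f by auto
    obtain z where z: "z \<in> ?B" "\<forall>y\<in>?B. (z,y) \<in> Q a"
      using wo_least[of "Q a" ?B] Q aF a BA by fastforce
    show "\<exists>z\<in>B. \<forall>y\<in>B. (z,y) \<in> ?R"
    proof (intro bexI[of _ z] ballI)
      fix y assume y: "y \<in> B"
      show "(z,y) \<in> ?R"
      proof (cases "f y = a")
        case True then show ?thesis using z y BA unfolding lexR_def by auto
      next
        case False then show ?thesis using z y BA a unfolding lexR_def by auto
      qed
    qed (use z in auto)
  qed
  then show ?thesis using Fld by simp
qed

definition keyR :: "('x \<Rightarrow> 'b::linorder) \<Rightarrow> 'x set \<Rightarrow> 'x rel" where
  "keyR g A = {(x,y). x \<in> A \<and> y \<in> A \<and> g x \<le> g y}"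

lemma wo_key:
  fixes g :: "'x \<Rightarrow> 'b::wellorder"
  assumes "inj_on g A"
  shows "Well_order (keyR g A) \<and> Field (keyR g A) = A"
proof -
  let ?R = "keyR g A"
  have Fld: "Field ?R = A" unfolding keyR_def Field_def by auto
  have lin: "Linear_order ?R" unfolding Fld
    unfolding linear_order_on_def partial_order_on_def preorder_on_def refl_on_def trans_def antisym_def total_on_def keyR_def
    using assms by (auto simp: inj_on_def)
  have "Well_order ?R"
  proof (subst Linear_order_Well_order_iff[OF lin], intro allI impI)
    fix B assume B: "B \<subseteq> Field ?R" "B \<noteq> {}"
    obtain b where b: "b \<in> B" using B by auto
    let ?m = "LEAST v. v \<in> g ` B"
    have m: "?m \<in> g ` B" using b by (meson LeastI imageI)
    then obtain z where z: "z \<in> B" "g z = ?m" by auto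
    have "\<forall>y\<in>B. g z \<le> g y" using z by (simp add: Least_le)
    then show "\<exists>z\<in>B. \<forall>y\<in>B. (z,y) \<in> ?R" using z B Fld unfolding keyR_def by auto
  qed
  then show ?thesis using Fld by simp
qed



locale setting =
  fixes k :: nat and S :: "'a::{wellorder, complete_linorder} set"
    and Lam :: "'a seq list set" and F :: "'a seq list \<Rightarrow> 'a seq list set"
  assumes cp: "comb_param k S Lam" and reg: "regressive k Lam F"
begin

definition s :: "'a seq list \<Rightarrow> nat \<Rightarrow> 'a" where
  "s eta l = Sup (rng (eta ! l))"
definition sig :: "'a seq list \<Rightarrow> nat \<Rightarrow> 'a" where
  "sig eta l = Sup (\<Union>nu\<in>F eta. rng (nu ! l))"

lemma lenL: "eta \<in> Lam \<Longrightarrow> length eta = Suc k"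
  using cp unfolding comb_param_def by auto

lemma InrL: "eta \<in> Lam \<Longrightarrow> l \<le> k \<Longrightarrow> \<exists>f. eta ! l = Inr f"
  using cp unfolding comb_param_def by blast

lemma sig_less: "eta \<in> Lam \<Longrightarrow> l \<le> k \<Longrightarrow> sig eta l < s eta l"
  using reg unfolding regressive_def sig_def s_def by auto

lemma F_countable: "eta \<in> Lam \<Longrightarrow> countable (F eta)"
  using reg unfolding regressive_def by auto

lemma F_rng_le: "x \<in> F eta \<Longrightarrow> Sup (rng (x ! l)) \<le> sig eta l"
  unfolding sig_def by (meson Sup_subset_mono UN_upper)

lemma F_s_less: "eta \<in> Lam \<Longrightarrow> nu \<in> F eta \<Longrightarrow> l \<le> k \<Longrightarrow> s nu l < s eta l"
  using F_rng_le[of nu eta l] sig_less[of eta l] unfolding s_def by auto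

lemma restr_len: "length (restr eta l n) = length eta"
  unfolding restr_def by simp

lemma restr_nth_other: "l' \<noteq> l \<Longrightarrow> restr eta l n ! l' = eta ! l'"
  unfolding restr_def by simp

lemma restr_nth_same: "l < length eta \<Longrightarrow> restr eta l n ! l = trunc (eta ! l) n"
  unfolding restr_def by simp

lemma restr_not_Lam:
  assumes "eta \<in> Lam" "l \<le> k" "y \<in> Lam" shows "restr eta l n \<noteq> y"
proof
  assume eq: "restr eta l n = y"
  obtain f where f: "eta ! l = Inr f" using InrL assms by blast
  obtain g where g: "y ! l = Inr g" using InrL assms by blast
  have "restr eta l n ! l = Inl (map f [0..<n])" using restr_nth_same[of l eta n] f lenL[OF assms(1)] assms(2) by simp
  then show False using eq g by simp
qed

lemma restr_inj:
  assumes "eta \<in> Lam" "l \<le> k" "restr eta l n = restr eta l m" shows "n = m"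
proof -
  obtain f where f: "eta ! l = Inr f" using InrL assms by blast
  have "restr eta l n ! l = restr eta l m ! l" using assms by simp
  then have "map f [0..<n] = map f [0..<m]" using restr_nth_same[of l eta] f lenL[OF assms(1)] assms(2) by simp
  then show ?thesis by (metis length_map length_upt minus_nat.diff_0)
qed

lemma restr_eq_other:
  assumes "restr nu l n = restr eta l n" "l' \<noteq> l" shows "nu ! l' = eta ! l'"
  using assms restr_nth_other by metis

lemma blocks_fin:
  assumes nu: "nu \<in> Lam" and eta: "eta \<in> Lam" and ne: "nu \<noteq> eta" and l: "l \<le> k"
  shows "finite {n. restr nu l n = restr eta l n}"
proof (cases "nu ! l = eta ! l")
  case True
  have "{n. restr nu l n = restr eta l n} = {}"
  proof (rule ccontr)
    assume "{n. restr nu l n = restr eta l n} \<noteq> {}"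
    then obtain n where n: "restr nu l n = restr eta l n" by auto
    have "nu = eta"
    proof (rule nth_equalityI)
      show "length nu = length eta" using lenL nu eta by simp
      fix i assume "i < length nu"
      show "nu ! i = eta ! i"
        using True restr_eq_other[OF n, of i] by (cases "i = l") auto
    qed
    then show False using ne by simp
  qed
  then show ?thesis by simp
next
  case False
  obtain f where f: "nu ! l = Inr f" using InrL nu l by blast
  obtain g where g: "eta ! l = Inr g" using InrL eta l by blast
  have "f \<noteq> g" using False f g by auto
  then obtain i where i: "f i \<noteq> g i" by auto
  have "{n. restr nu l n = restr eta l n} \<subseteq> {..i}"
  proof
    fix n assume "n \<in> {n. restr nu l n = restr eta l n}"
    then have "restr nu l n ! l = restr eta l n ! l" by simp
    then have "map f [0..<n] = map g [0..<n]"
      using restr_nth_same[of l nu n] restr_nth_same[of l eta n] f g lenL nu eta l by simp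
    then have "\<forall>j\<in>set [0..<n]. f j = g j" by (simp only: map_eq_conv)
    then have "\<forall>j<n. f j = g j" by simp
    then show "n \<in> {..i}" using i by (meson atMost_iff not_le_imp_less)
  qed
  then show ?thesis using finite_subset by blast
qed

definition good :: "'a seq list rel \<Rightarrow> 'a seq list set \<Rightarrow> ('a seq list \<Rightarrow> nat set) \<Rightarrow> 'a seq list \<Rightarrow> bool" where
  "good R X L eta \<longleftrightarrow> (\<exists>l\<in>L eta. \<exists>N. \<forall>n\<ge>N. \<forall>nu\<in>X. (nu,eta) \<in> R \<longrightarrow>
      (nu \<noteq> eta \<longrightarrow> restr nu l n \<noteq> restr eta l n) \<and> restr eta l n \<notin> F nu)"

definition claimP :: "'a seq list set \<Rightarrow> ('a seq list \<Rightarrow> nat set) \<Rightarrow> 'a seq list rel \<Rightarrow> bool" where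
  "claimP X L R \<longleftrightarrow> Well_order R \<and> Field R = X \<and>
     (\<forall>eta\<in>X. \<forall>nu\<in>F eta \<inter> X. (nu,eta) \<in> R \<and> nu \<noteq> eta) \<and> (\<forall>eta\<in>X. good R X L eta)"

definition claim :: "nat \<Rightarrow> bool" where
  "claim j \<longleftrightarrow> (\<forall>X L. X \<subseteq> Lam \<longrightarrow> le_aleph j X \<longrightarrow> (\<forall>eta\<in>X. L eta \<subseteq> {..k} \<and> j < card (L eta))
      \<longrightarrow> (\<exists>R. claimP X L R))"

lemma good_fin:
  assumes "l \<in> L eta" "finite Bad"
    and "\<And>n nu. n \<notin> Bad \<Longrightarrow> nu \<in> X \<Longrightarrow> (nu,eta) \<in> R \<Longrightarrow>
      (nu \<noteq> eta \<longrightarrow> restr nu l n \<noteq> restr eta l n) \<and> restr eta l n \<notin> F nu"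
  shows "good R X L eta"
proof -
  obtain N where N: "\<forall>n\<in>Bad. n < N" using assms(2) finite_nat_set_iff_bounded by blast
  show ?thesis unfolding good_def
    using assms(1) N assms(3) by (meson not_le)
qed

end


context setting begin

lemma le_aleph0_countable: "le_aleph 0 X \<Longrightarrow> countable X"
  using countable_card_le_natLeq[of X] by simp

lemma Tbad_finite:
  assumes "eta \<in> Lam" "l \<le> k" "finite B"
  shows "finite {n. restr eta l n \<in> B}"
proof -
  have "inj (\<lambda>n. restr eta l n)" using restr_inj assms by (meson injI)
  then have "finite ((\<lambda>n. restr eta l n) -` B)" using finite_vimageI assms(3) by blast
  then show ?thesis by (simp add: vimage_def)
qed

lemma base_fin:
  assumes fin: "finitary Lam F" shows "claim 0"
  unfolding claim_def
proof (intro allI impI)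
  fix X L assume X: "X \<subseteq> Lam" and le: "le_aleph 0 X"
    and L: "\<forall>eta\<in>X. L eta \<subseteq> {..k} \<and> 0 < card (L eta)"
  have "countable X" using le le_aleph0_countable by simp
  then obtain e :: "_ \<Rightarrow> nat" where e: "inj_on e X" by (auto simp: countable_def)
  define E where "E = {(nu,eta). eta \<in> X \<and> nu \<in> F eta \<inter> X}"
  have wfE: "wf E"
  proof -
    have "E \<subseteq> inv_image {(a,b). a < b} (\<lambda>eta. s eta 0)" using F_s_less X unfolding E_def by auto
    then show ?thesis using wf_inv_image[OF wellorder_class.wf] wf_subset by blast
  qed
  define C where "C eta = {nu. (nu,eta) \<in> E\<^sup>*}" for eta
  have C_s: "nu \<in> X \<and> s nu 0 \<le> s eta 0" if "(nu,eta) \<in> E\<^sup>*" "eta \<in> X" for nu eta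
    using that(1)
  proof (induction rule: converse_rtrancl_induct)
    case base then show ?case using that(2) by simp
  next
    case (step y z)
    then have "y \<in> F z" "y \<in> X" "z \<in> X" unfolding E_def by auto
    then have "s y 0 < s z 0" using F_s_less X by auto
    then show ?case using step \<open>y \<in> X\<close> by auto
  qed
  have Cfin: "eta \<in> X \<Longrightarrow> finite (C eta)" for eta
  proof (induction eta rule: wf_induct_rule[OF wfE])
    case (1 eta)
    have "C eta \<subseteq> insert eta (\<Union>nu\<in>F eta \<inter> X. C nu)"
    proof
      fix x assume "x \<in> C eta"
      then have "(x,eta) \<in> E\<^sup>*" unfolding C_def by simp
      then show "x \<in> insert eta (\<Union>nu\<in>F eta \<inter> X. C nu)"
      proof (cases rule: rtranclE)
        case base then show ?thesis by simp
      next
        case (step m)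
        then show ?thesis unfolding C_def E_def by auto
      qed
    qed
    moreover have "finite (F eta)" using fin 1 X unfolding finitary_def by auto
    moreover have "\<forall>nu\<in>F eta \<inter> X. finite (C nu)" using 1 unfolding E_def by auto
    ultimately show ?case by (meson finite.insertI finite_Int finite_UN_I finite_subset)
  qed
  have Cself: "eta \<in> C eta" for eta unfolding C_def by simp
  have Cmono: "C nu \<subseteq> C eta" if "eta \<in> X" "nu \<in> F eta \<inter> X" for nu eta
  proof
    fix x assume "x \<in> C nu"
    then have x: "(x,nu) \<in> E\<^sup>*" unfolding C_def by simp
    have "(nu, eta) \<in> E" using that unfolding E_def by auto
    then have "(x,eta) \<in> E\<^sup>*" using x by (rule rtrancl.rtrancl_into_rtrancl[rotated])
    then show "x \<in> C eta" unfolding C_def by simp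
  qed
  have Cstrict: "eta \<notin> C nu" if "eta \<in> X" "nu \<in> F eta \<inter> X" for nu eta
  proof
    assume "eta \<in> C nu"
    then have "s eta 0 \<le> s nu 0" using C_s that unfolding C_def by auto
    moreover have "s nu 0 < s eta 0" using F_s_less X that by auto
    ultimately show False by simp
  qed
  define h where "h eta = Max (e ` C eta)" for eta
  define key where "key eta = (h eta, card (C eta) * (h eta + 1) + e eta)" for eta
  have eb: "e eta \<le> h eta" if "eta \<in> X" for eta
    unfolding h_def using Cfin[OF that] Cself by simp
  have inj: "inj_on key X"
  proof (rule inj_onI)
    fix a b assume ab: "a \<in> X" "b \<in> X" "key a = key b"
    then have hh: "h a = h b" and c: "card (C a) * (h a + 1) + e a = card (C b) * (h b + 1) + e b"
      unfolding key_def by auto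
    have "(card (C a) * (h a + 1) + e a) mod (h a + 1) = e a mod (h a + 1)" by (rule mod_mult_self3)
    also have "\<dots> = e a" using eb[OF ab(1)] by simp
    finally have m1: "(card (C a) * (h a + 1) + e a) mod (h a + 1) = e a" .
    have "(card (C b) * (h b + 1) + e b) mod (h b + 1) = e b mod (h b + 1)" by (rule mod_mult_self3)
    also have "\<dots> = e b" using eb[OF ab(2)] by simp
    finally have m2: "(card (C b) * (h b + 1) + e b) mod (h b + 1) = e b" .
    have "e a = e b" using m1 m2 c hh by metis
    then show "a = b" using e ab inj_on_def by metis
  qed
  define R where "R = keyR key X"
  have wo: "Well_order R \<and> Field R = X" unfolding R_def using wo_key[OF inj] .
  have keyless: "key nu < key eta" if "eta \<in> X" "nu \<in> F eta \<inter> X" for nu eta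
  proof -
    have fC: "finite (C eta)" "finite (C nu)" using Cfin that by auto
    have ne: "e ` C nu \<noteq> {}" using Cself by auto
    have hle: "h nu \<le> h eta" unfolding h_def
      using Max_mono[OF image_mono[OF Cmono[OF that]] ne finite_imageI[OF fC(1)]] .
    show ?thesis
    proof (cases "h nu < h eta")
      case True then show ?thesis unfolding key_def by (simp add: less_prod_def)
    next
      case False
      then have H: "h nu = h eta" using hle by simp
      have "C nu \<subset> C eta" using Cmono[OF that] Cstrict[OF that] Cself by blast
      then have cc: "card (C nu) < card (C eta)" using fC psubset_card_mono by blast
      have "card (C nu) * (h eta + 1) + e nu < (card (C nu) + 1) * (h eta + 1)"
        using eb[of nu] that H by auto
      also have "\<dots> \<le> card (C eta) * (h eta + 1)" using cc by (intro mult_right_mono) auto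
      finally show ?thesis unfolding key_def using H by (simp add: less_prod_def)
    qed
  qed
  have partA: "\<forall>eta\<in>X. \<forall>nu\<in>F eta \<inter> X. (nu,eta) \<in> R \<and> nu \<noteq> eta"
    using keyless unfolding R_def keyR_def by (auto intro: less_imp_le)
  have partB: "good R X L eta" if eta: "eta \<in> X" for eta
  proof -
    obtain l where l: "l \<in> L eta" using L eta card_gt_0_iff by fastforce
    have lk: "l \<le> k" using L eta l by auto
    define P where "P = {nu\<in>X. (nu,eta) \<in> R}"
    have "P \<subseteq> {nu\<in>X. e nu \<le> h eta}"
    proof
      fix nu assume "nu \<in> P"
      then have "nu \<in> X" "key nu \<le> key eta" unfolding P_def R_def keyR_def by auto
      then have "h nu \<le> h eta" unfolding key_def by (auto simp: less_eq_prod_def)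
      then show "nu \<in> {nu\<in>X. e nu \<le> h eta}" using eb \<open>nu \<in> X\<close> by fastforce
    qed
    moreover have "finite {nu\<in>X. e nu \<le> h eta}"
    proof -
      have "inj_on e {nu\<in>X. e nu \<le> h eta}" using e by (auto intro: inj_on_subset)
      moreover have "e ` {nu\<in>X. e nu \<le> h eta} \<subseteq> {..h eta}" by auto
      ultimately show ?thesis by (meson finite_atMost finite_imageD finite_subset)
    qed
    ultimately have Pfin: "finite P" by (rule finite_subset)
    define Bad where "Bad = (\<Union>nu\<in>P - {eta}. {n. restr nu l n = restr eta l n}) \<union> {n. restr eta l n \<in> \<Union>(F ` P)}"
    have "finite Bad" unfolding Bad_def
    proof (rule finite_UnI)
      show "finite (\<Union>nu\<in>P - {eta}. {n. restr nu l n = restr eta l n})"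
        using Pfin blocks_fin X eta lk unfolding P_def by auto
      have "finite (\<Union>(F ` P))" using Pfin fin X unfolding finitary_def P_def by auto
      then show "finite {n. restr eta l n \<in> \<Union>(F ` P)}" using Tbad_finite[of eta l "\<Union>(F ` P)"] X eta lk by blast
    qed
    then show ?thesis
      by (rule good_fin[where L=L and eta=eta, OF l]) (auto simp: Bad_def P_def)
  qed
  show "\<exists>R. claimP X L R" unfolding claimP_def using wo partA partB by blast
qed

lemma base_simple:
  assumes sim: "simple k Lam F" shows "claim 0"
  unfolding claim_def
proof (intro allI impI)
  fix X L assume X: "X \<subseteq> Lam" and le: "le_aleph 0 X"
    and L: "\<forall>eta\<in>X. L eta \<subseteq> {..k} \<and> 0 < card (L eta)"
  have "countable X" using le le_aleph0_countable by simp
  then obtain e :: "_ \<Rightarrow> nat" where e: "inj_on e X" by (auto simp: countable_def)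
  define key where "key eta = (sig eta k, e eta)" for eta
  have inj: "inj_on key X" using e unfolding key_def inj_on_def by auto
  define R where "R = keyR key X"
  have wo: "Well_order R \<and> Field R = X" unfolding R_def using wo_key[OF inj] .
  have keyless: "key nu < key eta" if "eta \<in> X" "nu \<in> F eta \<inter> X" for nu eta
  proof -
    have "sig nu k < s nu k" using sig_less that X by auto
    also have "s nu k \<le> sig eta k" using F_rng_le that unfolding s_def by auto
    finally show ?thesis unfolding key_def by (simp add: less_prod_def)
  qed
  have partA: "\<forall>eta\<in>X. \<forall>nu\<in>F eta \<inter> X. (nu,eta) \<in> R \<and> nu \<noteq> eta"
    using keyless unfolding R_def keyR_def by (auto intro: less_imp_le)
  have partB: "good R X L eta" if eta: "eta \<in> X" for eta
  proof -
    obtain l where l: "l \<in> L eta" using L eta card_gt_0_iff by fastforce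
    have lk: "l \<le> k" using L eta l by auto
    have etaL: "eta \<in> Lam" using X eta by auto
    obtain g where g: "eta ! k = Inr g" using InrL etaL by blast
    have "sig eta k < Sup (range g)" using sig_less[OF etaL, of k] g unfolding s_def by simp
    then obtain i where i: "sig eta k < g i" using less_Sup_iff by (metis rangeE)
    define P0 where "P0 = {nu\<in>X. e nu \<le> e eta}"
    have P0fin: "finite P0"
    proof -
      have "inj_on e P0" using e unfolding P0_def by (auto intro: inj_on_subset)
      moreover have "e ` P0 \<subseteq> {..e eta}" unfolding P0_def by auto
      ultimately show ?thesis by (meson finite_atMost finite_imageD finite_subset)
    qed
    define Bad where "Bad = {..i} \<union> (\<Union>nu\<in>P0 - {eta}. {n. restr nu l n = restr eta l n})"
    have "finite Bad" unfolding Bad_def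
      using P0fin blocks_fin X eta lk unfolding P0_def by auto
    then show ?thesis
    proof (rule good_fin[where L=L and eta=eta, OF l])
      fix n nu assume n: "n \<notin> Bad" and nu: "nu \<in> X" "(nu, eta) \<in> R"
      have ni: "i < n" using n unfolding Bad_def by auto
      have nuL: "nu \<in> Lam" using nu X by auto
      have kle: "key nu \<le> key eta" using nu unfolding R_def keyR_def by auto
      then have sle: "sig nu k \<le> sig eta k" unfolding key_def by (auto simp: less_eq_prod_def)
      show "(nu \<noteq> eta \<longrightarrow> restr nu l n \<noteq> restr eta l n) \<and> restr eta l n \<notin> F nu"
      proof (intro conjI impI notI)
        assume ne: "nu \<noteq> eta" and eq: "restr nu l n = restr eta l n"
        have "first (nu ! k) = first (eta ! k)"
        proof (cases "l = k")
          case True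
          obtain f where f: "nu ! k = Inr f" using InrL nuL by blast
          have "restr nu l n ! k = restr eta l n ! k" using eq by simp
          then have "map f [0..<n] = map g [0..<n]"
            using restr_nth_same[of k nu n] restr_nth_same[of k eta n] f g lenL nuL etaL True by simp
          then have "\<forall>j\<in>set [0..<n]. f j = g j" by (simp only: map_eq_conv)
          then have "f 0 = g 0" using ni by simp
          then show ?thesis using f g by simp
        next
          case False
          then show ?thesis using restr_eq_other[OF eq, of k] by simp
        qed
        then have "F nu = F eta" using sim nuL etaL unfolding simple_def by blast
        then have "sig nu k = sig eta k" unfolding sig_def by simp
        then have "e nu \<le> e eta" using kle unfolding key_def by (auto simp: less_eq_prod_def)
        then have "nu \<in> P0 - {eta}" using nu ne unfolding P0_def by auto
        then show False using n eq unfolding Bad_def by auto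
      next
        assume T: "restr eta l n \<in> F nu"
        have bound: "Sup (rng (restr eta l n ! k)) \<le> sig eta k"
          using F_rng_le[OF T, of k] sle by simp
        show False
        proof (cases "l = k")
          case True
          have "restr eta l n ! k = Inl (map g [0..<n])"
            using restr_nth_same[of k eta n] g lenL etaL True by simp
          then have "g i \<le> Sup (rng (restr eta l n ! k))" using ni by (auto intro: Sup_upper)
          then show False using bound i by simp
        next
          case False
          then have "restr eta l n ! k = eta ! k" using restr_nth_other[of k l eta n] by simp
          then have "s eta k \<le> sig eta k" using bound unfolding s_def by simp
          then show False using sig_less[OF etaL, of k] by simp
        qed
      qed
    qed
  qed
  show "\<exists>R. claimP X L R" unfolding claimP_def using wo partA partB by blast
qed

end

context includes cardinal_syntax begin

lemma ctbl_le_inf: "countable A \<Longrightarrow> \<not> finite B \<Longrightarrow> |A| \<le>o |B|"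
  using countable_card_le_natLeq[of A] infinite_iff_natLeq_ordLeq[of B] ordLeq_transitive by blast

lemma un_le: "\<not> finite B \<Longrightarrow> |A1| \<le>o |B| \<Longrightarrow> |A2| \<le>o |B| \<Longrightarrow> |A1 \<union> A2| \<le>o |B|"
  using card_of_Un_ordLeq_infinite_Field[of "|B|" A1 A2] card_of_card_order_on[of B] by (simp add: Field_card_of)

lemma times_le: "\<not> finite B \<Longrightarrow> |A1| \<le>o |B| \<Longrightarrow> |A2| \<le>o |B| \<Longrightarrow> |A1 \<times> A2| \<le>o |B|"
  using card_of_Times_ordLeq_infinite_Field[of "|B|" A1 A2] card_of_card_order_on[of B] by (simp add: Field_card_of)

lemma le_aleph_mono: fixes A A' :: "'x set" assumes "le_aleph j A" "|A'| \<le>o |A|" shows "le_aleph j A'"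
proof (cases j)
  case 0 then show ?thesis using assms ordLeq_transitive by auto
next
  case (Suc i)
  then show ?thesis using assms by simp (meson ordLeq_transitive)
qed

lemma le_aleph_ctbl: "countable A \<Longrightarrow> le_aleph j A"
proof (induction j)
  case 0 then show ?case by (metis countable_card_le_natLeq le_aleph.simps(1))
next
  case (Suc j)
  have "|A| <o cardSuc |A|" using cardSuc_greater card_of_Card_order by blast
  then show ?case using Suc ordLess_imp_ordLeq by auto
qed

lemma le_aleph_insert: "le_aleph j A \<Longrightarrow> le_aleph j (insert a A)"
proof (cases "finite A")
  case True
  then show ?thesis by (simp add: countable_finite le_aleph_ctbl)
next
  case False
  assume "le_aleph j A"
  have "|insert a A| \<le>o |A|"
    using un_le[OF False, of "{a}" A] ctbl_le_inf[OF _ False, of "{a}"] card_of_refl[of A]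
    by (simp add: ordIso_imp_ordLeq)
  then show ?thesis using le_aleph_mono \<open>le_aleph j A\<close> by blast
qed

definition Lst :: "nat \<Rightarrow> 'x set \<Rightarrow> 'x list set" where
  "Lst m C = {xs. length xs = m \<and> set xs \<subseteq> C}"

lemma Lst_le: "\<not> finite B \<Longrightarrow> |C| \<le>o |B| \<Longrightarrow> |Lst m C| \<le>o |B|"
proof (induction m)
  case 0
  have "Lst 0 C = {[]}" unfolding Lst_def by auto
  then show ?case using ctbl_le_inf[of "{[]}" B] 0 by simp
next
  case (Suc m)
  have "Lst (Suc m) C \<subseteq> (\<lambda>(a,xs). a # xs) ` (C \<times> Lst m C)"
  proof
    fix xs assume "xs \<in> Lst (Suc m) C"
    then obtain a ys where "xs = a # ys" "a \<in> C" "ys \<in> Lst m C"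
      unfolding Lst_def by (cases xs) auto
    then show "xs \<in> (\<lambda>(a,xs). a # xs) ` (C \<times> Lst m C)" by force
  qed
  moreover have "|C \<times> Lst m C| \<le>o |B|" using times_le[of B C "Lst m C"] Suc by blast
  moreover have "|(\<lambda>(a,xs). a # xs) ` (C \<times> Lst m C)| \<le>o |C \<times> Lst m C|" by (rule card_of_image)
  ultimately show ?case using card_of_mono1 ordLeq_transitive by metis
qed

lemma segs_from_cardSuc:
  fixes X :: "'x set"
  assumes "le_aleph (Suc j) X"
  shows "\<exists>W. Well_order W \<and> Field W = X \<and> (\<forall>x\<in>X. le_aleph j {y. (y,x) \<in> W \<and> y \<noteq> x})"
proof -
  obtain B :: "'x set" where B: "le_aleph j B" and XB: "|X| \<le>o cardSuc |B|" using assms by auto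
  let ?r = "cardSuc |B|"
  have Cr: "Card_order ?r" using cardSuc_Card_order card_of_Card_order by blast
  have "?r =o |Field ?r|" using card_of_Field_ordIso[OF Cr] by (rule ordIso_symmetric)
  then have "|X| \<le>o |Field ?r|" using XB by (rule ordLeq_ordIso_trans[rotated])
  then obtain g where g: "inj_on g X" "g ` X \<subseteq> Field ?r" using card_of_ordLeq[of X "Field ?r"] by blast
  define Q where "Q a = keyR (\<lambda>_. (0::nat)) {x\<in>X. g x = a}" for a
  define W where "W = lexR ?r g Q X"
  have Qwo: "Well_order (Q a) \<and> Field (Q a) = {x\<in>X. g x = a}" for a
    unfolding Q_def by (rule wo_key) (use g(1) in \<open>auto simp: inj_on_def\<close>)
  have Wr: "Well_order ?r" using Cr unfolding card_order_on_def by blast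
  have W: "Well_order W \<and> Field W = X" unfolding W_def
  proof (rule wo_lex[OF Wr])
    show "\<forall>x\<in>X. g x \<in> Field ?r" using g by auto
    show "\<forall>a\<in>Field ?r. Well_order (Q a) \<and> Field (Q a) = {x\<in>X. g x = a}" using Qwo by blast
  qed
  have seg: "le_aleph j {y. (y,x) \<in> W \<and> y \<noteq> x}" if x: "x \<in> X" for x
  proof -
    let ?S = "{y. (y,x) \<in> W \<and> y \<noteq> x}"
    have "g ` ?S \<subseteq> underS ?r (g x)"
    proof
      fix z assume "z \<in> g ` ?S"
      then obtain y where y: "z = g y" "(y,x) \<in> W" "y \<noteq> x" by auto
      have "g y \<noteq> g x" using y g(1) x unfolding W_def lexR_def inj_on_def by auto
      then show "z \<in> underS ?r (g x)" using y unfolding W_def lexR_def underS_def by auto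
    qed
    moreover have "?S \<subseteq> X" unfolding W_def lexR_def by auto
    then have "inj_on g ?S" using g(1) inj_on_subset by blast
    ultimately have "|?S| \<le>o |underS ?r (g x)|" using card_of_ordLeq by blast
    moreover have "|underS ?r (g x)| <o ?r" using card_of_underS[OF Cr] g x by auto
    ultimately have lt: "|?S| <o ?r" using ordLeq_ordLess_trans by blast
    have "|?S| \<le>o |B|"
    proof (rule ccontr)
      assume "\<not> |?S| \<le>o |B|"
      then have "|B| <o |?S|" using not_ordLeq_iff_ordLess card_of_Well_order by blast
      then have "?r \<le>o |?S|" using cardSuc_ordLess_ordLeq card_of_Card_order by blast
      then show False using lt not_ordLess_ordLeq by blast
    qed
    then show ?thesis using le_aleph_mono B by blast
  qed
  show ?thesis using W seg by blast
qed


end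


context setting begin
unbundle cardinal_syntax

definition Coord :: "'a seq list set \<Rightarrow> nat \<Rightarrow> 'a seq set" where
  "Coord Z l = (\<lambda>nu. nu ! l) ` Z \<union> (\<lambda>x. x ! l) ` (\<Union>(F ` Z))"

definition stp :: "'a seq list set \<Rightarrow> 'a seq list set \<Rightarrow> 'a seq list set" where
  "stp X Z = Z \<union> (\<Union>nu\<in>Z. F nu \<inter> X) \<union> {eta\<in>X. \<forall>l\<le>k. eta ! l \<in> Coord Z l}"

definition clo :: "'a seq list set \<Rightarrow> 'a seq list set \<Rightarrow> 'a seq list set" where
  "clo X Y = (\<Union>n. (stp X ^^ n) Y)"

lemma Coord_mono: "Z \<subseteq> Z' \<Longrightarrow> Coord Z l \<subseteq> Coord Z' l"
  unfolding Coord_def by blast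

lemma stp_mono: assumes "Z \<subseteq> Z'" shows "stp X Z \<subseteq> stp X Z'"
proof
  fix eta assume e: "eta \<in> stp X Z"
  have C: "\<And>l. Coord Z l \<subseteq> Coord Z' l" using Coord_mono[OF assms] .
  show "eta \<in> stp X Z'"
  proof (cases "eta \<in> {eta\<in>X. \<forall>l\<le>k. eta ! l \<in> Coord Z l}")
    case True
    then have "eta \<in> {eta\<in>X. \<forall>l\<le>k. eta ! l \<in> Coord Z' l}" using C by blast
    then show ?thesis unfolding stp_def by blast
  next
    case False
    then have "eta \<in> Z \<union> (\<Union>nu\<in>Z. F nu \<inter> X)" using e unfolding stp_def by blast
    then show ?thesis using assms unfolding stp_def by blast
  qed
qed

lemma stp_incl: "Z \<subseteq> stp X Z" unfolding stp_def by blast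

lemma iter_mono_n: "n \<le> m \<Longrightarrow> (stp X ^^ n) Y \<subseteq> (stp X ^^ m) Y"
proof (induction m)
  case 0 then show ?case by simp
next
  case (Suc m)
  show ?case
  proof (cases "n = Suc m")
    case False
    then have "(stp X ^^ n) Y \<subseteq> (stp X ^^ m) Y" using Suc by simp
    also have "\<dots> \<subseteq> (stp X ^^ Suc m) Y" using stp_incl by simp
    finally show ?thesis .
  next
    case True then show ?thesis by simp
  qed
qed

lemma iter_mono_Y: "Y \<subseteq> Y' \<Longrightarrow> (stp X ^^ n) Y \<subseteq> (stp X ^^ n) Y'"
proof (induction n)
  case 0 then show ?case by simp
next
  case (Suc n) then show ?case using stp_mono[of "(stp X ^^ n) Y" "(stp X ^^ n) Y'" X] by simp
qed

lemma stp_sub: "Z \<subseteq> X \<Longrightarrow> stp X Z \<subseteq> X"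
  unfolding stp_def by blast

lemma iter_sub: "Y \<subseteq> X \<Longrightarrow> (stp X ^^ n) Y \<subseteq> X"
proof (induction n)
  case 0 then show ?case by simp
next
  case (Suc n) then show ?case using stp_sub[of "(stp X ^^ n) Y" X] by simp
qed

lemma clo_sub: assumes "Y \<subseteq> X" shows "clo X Y \<subseteq> X"
proof
  fix y assume "y \<in> clo X Y"
  then obtain n where "y \<in> (stp X ^^ n) Y" unfolding clo_def by blast
  then show "y \<in> X" using iter_sub[OF assms, of n] by blast
qed

lemma clo_incl: "Y \<subseteq> clo X Y"
proof
  fix y assume "y \<in> Y"
  then have "y \<in> (stp X ^^ 0) Y" by simp
  then show "y \<in> clo X Y" unfolding clo_def by blast
qed

lemma clo_mono: assumes "Y \<subseteq> Y'" shows "clo X Y \<subseteq> clo X Y'"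
proof
  fix y assume "y \<in> clo X Y"
  then obtain n where "y \<in> (stp X ^^ n) Y" unfolding clo_def by blast
  then have "y \<in> (stp X ^^ n) Y'" using iter_mono_Y[OF assms] by blast
  then show "y \<in> clo X Y'" unfolding clo_def by blast
qed

lemma clo_F: "nu \<in> clo X Y \<Longrightarrow> x \<in> F nu \<Longrightarrow> x \<in> X \<Longrightarrow> x \<in> clo X Y"
proof -
  assume "nu \<in> clo X Y" "x \<in> F nu" "x \<in> X"
  then obtain n where "nu \<in> (stp X ^^ n) Y" unfolding clo_def by blast
  then have "x \<in> stp X ((stp X ^^ n) Y)" using \<open>x \<in> F nu\<close> \<open>x \<in> X\<close> unfolding stp_def by blast
  then have "x \<in> (stp X ^^ Suc n) Y" by simp
  then show ?thesis unfolding clo_def by blast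
qed

lemma Coord_clo: assumes c: "c \<in> Coord (clo X Y) l" shows "\<exists>n. c \<in> Coord ((stp X ^^ n) Y) l"
proof -
  obtain nu where nu: "nu \<in> clo X Y" and cc: "c = nu ! l \<or> (\<exists>x\<in>F nu. c = x ! l)"
    using c unfolding Coord_def by blast
  obtain n where "nu \<in> (stp X ^^ n) Y" using nu unfolding clo_def by blast
  then have "c \<in> Coord ((stp X ^^ n) Y) l" using cc unfolding Coord_def by blast
  then show ?thesis by blast
qed

lemma clo_c2:
  assumes "eta \<in> X" "\<forall>l\<le>k. eta ! l \<in> Coord (clo X Y) l"
  shows "eta \<in> clo X Y"
proof -
  have "\<forall>l\<in>{..k}. \<exists>n. eta ! l \<in> Coord ((stp X ^^ n) Y) l" using assms(2) Coord_clo by simp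
  then obtain f where f: "\<forall>l\<in>{..k}. eta ! l \<in> Coord ((stp X ^^ f l) Y) l"
    using bchoice[of "{..k}" "\<lambda>l n. eta ! l \<in> Coord ((stp X ^^ n) Y) l"] by blast
  define N where "N = (\<Sum>l\<le>k. f l)"
  have "\<forall>l\<le>k. eta ! l \<in> Coord ((stp X ^^ N) Y) l"
  proof (intro allI impI)
    fix l assume l: "l \<le> k"
    have "f l \<le> N" unfolding N_def using l by (intro member_le_sum) auto
    then have "(stp X ^^ f l) Y \<subseteq> (stp X ^^ N) Y" by (rule iter_mono_n)
    then have "Coord ((stp X ^^ f l) Y) l \<subseteq> Coord ((stp X ^^ N) Y) l" by (rule Coord_mono)
    then show "eta ! l \<in> Coord ((stp X ^^ N) Y) l" using f l by auto
  qed
  then have "eta \<in> stp X ((stp X ^^ N) Y)" using assms(1) unfolding stp_def by blast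
  then have "eta \<in> (stp X ^^ Suc N) Y" by simp
  then show ?thesis unfolding clo_def by blast
qed

lemma stp_card:
  assumes X: "X \<subseteq> Lam" and Z: "Z \<subseteq> Lam" and B: "\<not> finite B" and ZB: "|Z| \<le>o |B|"
  shows "|stp X Z| \<le>o |B|"
proof -
  have Fle: "|F nu| \<le>o |B|" if "nu \<in> Z" for nu
    using ctbl_le_inf[OF F_countable B] that Z by auto
  have FZ: "|\<Union>(F ` Z)| \<le>o |B|" using card_of_UNION_ordLeq_infinite[OF B ZB] Fle by blast
  have "(\<Union>nu\<in>Z. F nu \<inter> X) \<subseteq> \<Union>(F ` Z)" by blast
  then have FZX: "|\<Union>nu\<in>Z. F nu \<inter> X| \<le>o |B|"
    using ordLeq_transitive[OF card_of_mono1 FZ] by blast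
  have Cle: "|Coord Z l| \<le>o |B|" for l
  proof -
    have "|(\<lambda>nu. nu ! l) ` Z| \<le>o |B|" using ordLeq_transitive[OF card_of_image ZB] .
    moreover have "|(\<lambda>x. x ! l) ` (\<Union>(F ` Z))| \<le>o |B|" using ordLeq_transitive[OF card_of_image FZ] .
    ultimately show ?thesis unfolding Coord_def by (rule un_le[OF B])
  qed
  define CC where "CC = (\<Union>l\<in>{..k}. Coord Z l)"
  have kB: "|{..k}| \<le>o |B|" using ctbl_le_inf[of "{..k}" B] B by (simp add: countable_finite)
  have CC: "|CC| \<le>o |B|" unfolding CC_def
    using card_of_UNION_ordLeq_infinite[OF B kB] Cle by blast
  have "{eta\<in>X. \<forall>l\<le>k. eta ! l \<in> Coord Z l} \<subseteq> Lst (Suc k) CC"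
  proof
    fix eta assume e: "eta \<in> {eta\<in>X. \<forall>l\<le>k. eta ! l \<in> Coord Z l}"
    then have len: "length eta = Suc k" using lenL X by auto
    have "set eta \<subseteq> CC"
    proof
      fix x assume "x \<in> set eta"
      then obtain i where i: "i < length eta" "eta ! i = x" by (meson in_set_conv_nth)
      then have ik: "i \<le> k" using len by simp
      have "\<forall>l\<le>k. eta ! l \<in> Coord Z l" using e by blast
      then have "x \<in> Coord Z i" using ik i by blast
      then show "x \<in> CC" using ik unfolding CC_def by blast
    qed
    then show "eta \<in> Lst (Suc k) CC" unfolding Lst_def using len by simp
  qed
  then have G: "|{eta\<in>X. \<forall>l\<le>k. eta ! l \<in> Coord Z l}| \<le>o |B|"
    using ordLeq_transitive[OF card_of_mono1 Lst_le[OF B CC]] by blast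
  show ?thesis unfolding stp_def by (intro un_le[OF B] ZB FZX G)
qed

lemma clo_card:
  assumes X: "X \<subseteq> Lam" and Y: "Y \<subseteq> X" and B: "\<not> finite B" and YB: "|Y| \<le>o |B|"
  shows "|clo X Y| \<le>o |B|"
proof -
  have it: "|(stp X ^^ n) Y| \<le>o |B|" for n
  proof (induction n)
    case 0 then show ?case using YB by simp
  next
    case (Suc n)
    have "(stp X ^^ n) Y \<subseteq> Lam" using iter_sub[OF Y] X by blast
    then show ?case using stp_card[OF X _ B Suc] by simp
  qed
  have "|UNIV :: nat set| \<le>o |B|" using ctbl_le_inf[of "UNIV :: nat set" B] B by simp
  then show ?thesis unfolding clo_def using card_of_UNION_ordLeq_infinite[OF B, of UNIV "\<lambda>n. (stp X ^^ n) Y"] it by blast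
qed

lemma clo_le_aleph:
  assumes X: "X \<subseteq> Lam" and Y: "Y \<subseteq> X" and le: "le_aleph j Y"
  shows "le_aleph j (clo X Y)"
proof (cases "finite Y")
  case True
  have "|Y| \<le>o |UNIV :: nat set|" using ctbl_le_inf[of Y "UNIV :: nat set"] True by (simp add: countable_finite)
  then have "|clo X Y| \<le>o |UNIV :: nat set|" using clo_card[OF X Y infinite_UNIV_nat] by simp
  then have "countable (clo X Y)" by (meson card_of_ordLeq countable_def top_greatest)
  then show ?thesis by (rule le_aleph_ctbl)
next
  case False
  have "|clo X Y| \<le>o |Y|" using clo_card[OF X Y False] card_of_refl ordIso_imp_ordLeq by blast
  then show ?thesis using le_aleph_mono le by blast
qed

end


lemma finite_max_lin:
  assumes lin: "Linear_order W" and fin: "finite A" and ne: "A \<noteq> {}" and sub: "A \<subseteq> Field W"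
  shows "\<exists>m\<in>A. \<forall>x\<in>A. (x,m) \<in> W"
  using fin ne sub
proof (induction A rule: finite_ne_induct)
  case (singleton x)
  then have "(x,x) \<in> W" using lin unfolding linear_order_on_def partial_order_on_def preorder_on_def refl_on_def by auto
  then show ?case by auto
next
  case (insert x A)
  then obtain m where m: "m \<in> A" "\<forall>y\<in>A. (y,m) \<in> W" by auto
  have tr: "trans W" using lin unfolding linear_order_on_def partial_order_on_def preorder_on_def by auto
  have xx: "(x,x) \<in> W" using lin insert unfolding linear_order_on_def partial_order_on_def preorder_on_def refl_on_def by auto
  show ?case
  proof (cases "(x,m) \<in> W")
    case True then show ?thesis using m by auto
  next
    case False
    then have "(m,x) \<in> W" using lin insert m unfolding linear_order_on_def total_on_def
      by (metis insert_subset subsetD)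
    then have "\<forall>y\<in>insert x A. (y,x) \<in> W" using m tr xx by (auto dest: transD)
    then show ?thesis by auto
  qed
qed

context setting begin
unbundle cardinal_syntax

lemma Coord_single: "c \<in> Coord Z l \<Longrightarrow> \<exists>nu\<in>Z. c \<in> Coord {nu} l"
  unfolding Coord_def by blast

lemma step: assumes IH: "claim j" shows "claim (Suc j)"
  unfolding claim_def
proof (intro allI impI)
  fix X L assume X: "X \<subseteq> Lam" and le: "le_aleph (Suc j) X"
    and L: "\<forall>eta\<in>X. L eta \<subseteq> {..k} \<and> Suc j < card (L eta)"
  obtain W where W: "Well_order W" "Field W = X" and segs: "\<forall>x\<in>X. le_aleph j {y. (y,x) \<in> W \<and> y \<noteq> x}"
    using segs_from_cardSuc[OF le] by blast
  have lin: "Linear_order W" using W unfolding well_order_on_def by blast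
  have Wrefl: "a \<in> X \<Longrightarrow> (a,a) \<in> W" for a
    using lin W unfolding linear_order_on_def partial_order_on_def preorder_on_def refl_on_def by auto
  have Wtrans: "trans W" using lin unfolding linear_order_on_def partial_order_on_def preorder_on_def by auto
  have Wanti: "antisym W" using lin unfolding linear_order_on_def partial_order_on_def by auto
  have WX: "(a,b) \<in> W \<Longrightarrow> a \<in> X \<and> b \<in> X" for a b using W unfolding Field_def by auto
  define I where "I a = {y. (y,a) \<in> W}" for a
  have I_sub: "I a \<subseteq> X" for a unfolding I_def using WX by auto
  have I_le: "le_aleph j (I a)" if "a \<in> X" for a
  proof -
    have "I a = insert a {y. (y,a) \<in> W \<and> y \<noteq> a}" unfolding I_def using Wrefl that by auto
    moreover have "le_aleph j {y. (y,a) \<in> W \<and> y \<noteq> a}" using segs that by blast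
    ultimately show ?thesis using le_aleph_insert by simp
  qed
  define K where "K a = clo X (I a)" for a
  have K_sub: "K a \<subseteq> X" for a unfolding K_def using clo_sub[OF I_sub] .
  have K_le: "le_aleph j (K a)" if "a \<in> X" for a
    unfolding K_def using clo_le_aleph[OF X I_sub I_le[OF that]] .
  have K_mono: "K a \<subseteq> K b" if "(a,b) \<in> W" for a b
  proof -
    have "I a \<subseteq> I b" unfolding I_def using that Wtrans by (auto dest: transD)
    then show ?thesis unfolding K_def by (rule clo_mono)
  qed
  have K_self: "a \<in> K a" if "a \<in> X" for a
  proof -
    have "a \<in> I a" unfolding I_def using Wrefl[OF that] by simp
    then show ?thesis unfolding K_def using clo_incl[of "I a" X] by blast
  qed
  have rho_ex: "\<exists>a. a \<in> X \<and> eta \<in> K a \<and> (\<forall>b\<in>X. eta \<in> K b \<longrightarrow> (a,b) \<in> W)" if "eta \<in> X" for eta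
  proof -
    have "{a\<in>X. eta \<in> K a} \<noteq> {}" using K_self that by auto
    then obtain a where "a \<in> {a\<in>X. eta \<in> K a}" "\<forall>b\<in>{a\<in>X. eta \<in> K a}. (a,b) \<in> W"
      using wo_least[OF W(1), of "{a\<in>X. eta \<in> K a}"] W(2) by blast
    then show ?thesis by auto
  qed
  define rho where "rho eta = (SOME a. a \<in> X \<and> eta \<in> K a \<and> (\<forall>b\<in>X. eta \<in> K b \<longrightarrow> (a,b) \<in> W))" for eta
  have rho: "rho eta \<in> X \<and> eta \<in> K (rho eta) \<and> (\<forall>b\<in>X. eta \<in> K b \<longrightarrow> (rho eta, b) \<in> W)" if "eta \<in> X" for eta
    unfolding rho_def using someI_ex[OF rho_ex[OF that]] .
  define P where "P a = {nu\<in>X. (rho nu, a) \<in> W \<and> rho nu \<noteq> a}" for a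
  have P_c2: "eta \<in> P a" if a: "a \<in> X" and eta: "eta \<in> X" and co: "\<forall>l\<le>k. eta ! l \<in> Coord (P a) l" for a eta
  proof -
    have "\<forall>l\<in>{..k}. \<exists>nu\<in>P a. eta ! l \<in> Coord {nu} l" using co Coord_single by simp
    then obtain g where g: "\<forall>l\<in>{..k}. g l \<in> P a \<and> eta ! l \<in> Coord {g l} l"
      using bchoice[of "{..k}" "\<lambda>l nu. nu \<in> P a \<and> eta ! l \<in> Coord {nu} l"] by blast
    have gX: "g l \<in> X" if "l \<le> k" for l using g that unfolding P_def by auto
    obtain b where b: "b \<in> rho ` g ` {..k}" "\<forall>x\<in>rho ` g ` {..k}. (x,b) \<in> W"
      using finite_max_lin[OF lin, of "rho ` g ` {..k}"] rho gX W(2) by fastforce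
    have bX: "b \<in> X" using b rho gX by auto
    have "\<forall>l\<le>k. eta ! l \<in> Coord (K b) l"
    proof (intro allI impI)
      fix l assume l: "l \<le> k"
      have "(rho (g l), b) \<in> W" using b l by auto
      then have "g l \<in> K b" using K_mono rho gX l by blast
      then show "eta ! l \<in> Coord (K b) l" using g l Coord_mono[of "{g l}" "K b" l] by auto
    qed
    then have "eta \<in> K b" unfolding K_def using clo_c2 eta by simp
    then have eb: "(rho eta, b) \<in> W" using rho eta bX by blast
    obtain l0 where l0: "l0 \<le> k" "b = rho (g l0)" using b by auto
    have ba: "(b, a) \<in> W" "b \<noteq> a" using g l0 unfolding P_def by auto
    have "(rho eta, a) \<in> W" using eb ba Wtrans by (auto dest: transD)
    moreover have "rho eta \<noteq> a" using eb ba Wanti by (auto dest: antisymD)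
    ultimately show ?thesis unfolding P_def using eta by auto
  qed
  define D where "D a = {eta\<in>X. rho eta = a}" for a
  have D_le: "le_aleph j (D a)" if "a \<in> X" for a
  proof -
    have "D a \<subseteq> K a" unfolding D_def using rho by auto
    then show ?thesis using le_aleph_mono[OF K_le[OF that] card_of_mono1] by blast
  qed
  have u_ne: "\<exists>l\<le>k. eta ! l \<notin> Coord (P (rho eta)) l" if "eta \<in> X" for eta
  proof (rule ccontr)
    assume "\<not> ?thesis"
    then have "eta \<in> P (rho eta)" using P_c2 rho that by blast
    then show False unfolding P_def by auto
  qed
  define l0 where "l0 eta = (SOME l. l \<le> k \<and> eta ! l \<notin> Coord (P (rho eta)) l)" for eta
  have l0: "l0 eta \<le> k \<and> eta ! l0 eta \<notin> Coord (P (rho eta)) (l0 eta)" if "eta \<in> X" for eta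
    unfolding l0_def using someI_ex[OF u_ne[OF that]] by blast
  define L' where "L' eta = (if (\<exists>l'\<le>k. l' \<noteq> l0 eta \<and> eta ! l' \<notin> Coord (P (rho eta)) l') then L eta else L eta - {l0 eta})" for eta
  have L'_sub: "L' eta \<subseteq> L eta" for eta unfolding L'_def by auto
  have L'_prop: "L' eta \<subseteq> {..k} \<and> j < card (L' eta)" if "eta \<in> X" for eta
  proof -
    have fin: "finite (L eta)" using L that finite_subset by blast
    have "card (L eta) - 1 \<le> card (L' eta)"
      unfolding L'_def using card_Diff_singleton_if[of "L eta" "l0 eta"] by auto
    then show ?thesis using L that L'_sub by fastforce
  qed
  have L'_other: "\<exists>l'\<le>k. l' \<noteq> l \<and> eta ! l' \<notin> Coord (P (rho eta)) l'" if "eta \<in> X" "l \<in> L' eta" for eta l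
  proof (cases "\<exists>l'\<le>k. l' \<noteq> l0 eta \<and> eta ! l' \<notin> Coord (P (rho eta)) l'")
    case True
    then obtain l' where l': "l' \<le> k" "l' \<noteq> l0 eta" "eta ! l' \<notin> Coord (P (rho eta)) l'" by blast
    show ?thesis
    proof (cases "l = l0 eta")
      case True then show ?thesis using l' by auto
    next
      case False then show ?thesis using l0[OF that(1)] by blast
    qed
  next
    case False
    then have "L' eta = L eta - {l0 eta}" unfolding L'_def by (rule if_not_P)
    then have "l \<noteq> l0 eta" using that(2) by auto
    then show ?thesis using l0[OF that(1)] by blast
  qed
  have "\<forall>a\<in>X. \<exists>R. claimP (D a) L' R"
  proof
    fix a assume a: "a \<in> X"
    have "D a \<subseteq> Lam" unfolding D_def using X by auto
    moreover have "\<forall>eta\<in>D a. L' eta \<subseteq> {..k} \<and> j < card (L' eta)" unfolding D_def using L'_prop by auto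
    ultimately show "\<exists>R. claimP (D a) L' R" using IH D_le[OF a] unfolding claim_def by blast
  qed
  then obtain RR where RR: "\<forall>a\<in>X. claimP (D a) L' (RR a)" by metis
  define R where "R = lexR W rho RR X"
  have wo: "Well_order R \<and> Field R = X" unfolding R_def
  proof (rule wo_lex[OF W(1)])
    show "\<forall>x\<in>X. rho x \<in> Field W" using rho W(2) by auto
    show "\<forall>a\<in>Field W. Well_order (RR a) \<and> Field (RR a) = {x\<in>X. rho x = a}"
      using RR W(2) unfolding claimP_def D_def by auto
  qed
  have partA: "\<forall>eta\<in>X. \<forall>nu\<in>F eta \<inter> X. (nu,eta) \<in> R \<and> nu \<noteq> eta"
  proof (intro ballI)
    fix eta nu assume eta: "eta \<in> X" and nu: "nu \<in> F eta \<inter> X"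
    have "nu \<in> K (rho eta)" unfolding K_def using clo_F rho[OF eta] nu unfolding K_def by blast
    then have W1: "(rho nu, rho eta) \<in> W" using rho nu eta by blast
    show "(nu,eta) \<in> R \<and> nu \<noteq> eta"
    proof (cases "rho nu = rho eta")
      case True
      have "nu \<in> D (rho eta)" "eta \<in> D (rho eta)" using True nu eta unfolding D_def by auto
      moreover have "claimP (D (rho eta)) L' (RR (rho eta))" using RR rho[OF eta] by blast
      then have "\<forall>e\<in>D (rho eta). \<forall>v\<in>F e \<inter> D (rho eta). (v,e) \<in> RR (rho eta) \<and> v \<noteq> e"
        unfolding claimP_def by (elim conjE) assumption
      ultimately have "(nu,eta) \<in> RR (rho eta) \<and> nu \<noteq> eta" using nu by blast
      then show ?thesis using True nu eta unfolding R_def lexR_def by simp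
    next
      case False
      then show ?thesis using W1 nu eta unfolding R_def lexR_def by auto
    qed
  qed
  have partB: "good R X L eta" if eta: "eta \<in> X" for eta
  proof -
    let ?a = "rho eta"
    have aX: "?a \<in> X" using rho eta by blast
    have etaD: "eta \<in> D ?a" unfolding D_def using eta by auto
    have "claimP (D ?a) L' (RR ?a)" using RR aX by blast
    then have "\<forall>eta\<in>D ?a. good (RR ?a) (D ?a) L' eta" unfolding claimP_def by (elim conjE) assumption
    then have "good (RR ?a) (D ?a) L' eta" using etaD by blast
    then obtain l N where l: "l \<in> L' eta" and N: "\<forall>n\<ge>N. \<forall>nu\<in>D ?a. (nu,eta) \<in> RR ?a \<longrightarrow>
      (nu \<noteq> eta \<longrightarrow> restr nu l n \<noteq> restr eta l n) \<and> restr eta l n \<notin> F nu"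
      unfolding good_def by blast
    obtain l' where l': "l' \<le> k" "l' \<noteq> l" "eta ! l' \<notin> Coord (P ?a) l'" using L'_other[OF eta l] by blast
    show ?thesis unfolding good_def
    proof (intro bexI[of _ l] exI[of _ N] allI impI ballI)
      fix n nu assume n: "N \<le> n" and nu: "nu \<in> X" and R: "(nu, eta) \<in> R"
      show "(nu \<noteq> eta \<longrightarrow> restr nu l n \<noteq> restr eta l n) \<and> restr eta l n \<notin> F nu"
      proof (cases "rho nu = ?a")
        case True
        then have "(nu,eta) \<in> RR ?a" "nu \<in> D ?a" using R nu unfolding R_def lexR_def D_def by auto
        then show ?thesis using N n by blast
      next
        case False
        then have "(rho nu, ?a) \<in> W" using R unfolding R_def lexR_def by auto
        then have nuP: "nu \<in> P ?a" unfolding P_def using False nu by auto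
        show ?thesis
        proof (intro conjI impI notI)
          assume "restr nu l n = restr eta l n"
          then have e1: "nu ! l' = eta ! l'" using restr_eq_other l'(2) by metis
          have "nu ! l' \<in> (\<lambda>v. v ! l') ` P ?a" using nuP by (rule imageI)
          then have "nu ! l' \<in> Coord (P ?a) l'" unfolding Coord_def by (rule UnI1)
          then have "eta ! l' \<in> Coord (P ?a) l'" using e1 by simp
          then show False using l' by blast
        next
          assume T: "restr eta l n \<in> F nu"
          have e1: "restr eta l n ! l' = eta ! l'" using restr_nth_other l'(2) by metis
          have "restr eta l n \<in> \<Union>(F ` P ?a)" using nuP T by blast
          then have "restr eta l n ! l' \<in> (\<lambda>x. x ! l') ` \<Union>(F ` P ?a)" by (rule imageI)
          then have "restr eta l n ! l' \<in> Coord (P ?a) l'" unfolding Coord_def by (rule UnI2)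
          then have "eta ! l' \<in> Coord (P ?a) l'" using e1 by simp
          then show False using l' by blast
        qed
      qed
    qed (use l L'_sub in auto)
  qed
  show "\<exists>R. claimP X L R" unfolding claimP_def using wo partA partB by blast
qed

end


context setting begin

lemma final:
  assumes sub: "Lam' \<subseteq> Lam" and cP: "claimP Lam' (\<lambda>_. {..k}) R"
  shows "free_for k Lam F Lam'"
proof (cases "Lam' = {}")
  case True
  have "Well_order (keyR (\<lambda>_. (0::nat)) ({}::'a seq list set)) \<and> Field (keyR (\<lambda>_. (0::nat)) ({}::'a seq list set)) = {}"
    by (rule wo_key) simp
  then show ?thesis unfolding free_for_def using True by (intro exI[of _ "keyR (\<lambda>_. (0::nat)) ({}::'a seq list set)"] exI[of _ "\<lambda>_. 0"]) auto
next
  case False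
  let ?LL = "Lam' \<union> (\<Union>eta\<in>Lam'. F eta)"
  have R: "Well_order R" "Field R = Lam'" using cP unfolding claimP_def by auto
  have RA: "\<forall>eta\<in>Lam'. \<forall>nu\<in>F eta \<inter> Lam'. (nu,eta) \<in> R \<and> nu \<noteq> eta" using cP unfolding claimP_def by blast
  have RB: "\<forall>eta\<in>Lam'. good R Lam' (\<lambda>_. {..k}) eta" using cP unfolding claimP_def by blast
  have Rrefl: "w \<in> Lam' \<Longrightarrow> (w,w) \<in> R" for w
    using R unfolding well_order_on_def linear_order_on_def partial_order_on_def preorder_on_def refl_on_def by auto
  obtain m0 where m0: "m0 \<in> Lam'" "\<forall>w\<in>Lam'. (m0, w) \<in> R" using wo_least[OF R(1), of Lam'] R False by auto
  define user where "user y = (SOME w. w \<in> Lam' \<and> y \<in> F w \<and> (\<forall>w'\<in>Lam'. y \<in> F w' \<longrightarrow> (w,w') \<in> R))" for y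
  have user: "user y \<in> Lam' \<and> y \<in> F (user y) \<and> (\<forall>w'\<in>Lam'. y \<in> F w' \<longrightarrow> (user y,w') \<in> R)"
    if "w \<in> Lam'" "y \<in> F w" for y w
  proof -
    have "\<exists>w. w \<in> Lam' \<and> y \<in> F w \<and> (\<forall>w'\<in>Lam'. y \<in> F w' \<longrightarrow> (w,w') \<in> R)"
      using wo_least[OF R(1), of "{w\<in>Lam'. y \<in> F w}"] R that by auto
    then show ?thesis unfolding user_def by (rule someI_ex)
  qed
  define f where "f y = (if y \<in> Lam' then y else if y \<in> Lam then m0 else user y)" for y
  have fLam': "f w = w" if "w \<in> Lam'" for w using that unfolding f_def by simp
  have fL: "f y \<in> Lam'" if y: "y \<in> ?LL" for y
  proof (cases "y \<in> Lam'")
    case True then show ?thesis using fLam' by simp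
  next
    case nL: False
    show ?thesis
    proof (cases "y \<in> Lam")
      case True then show ?thesis using nL m0 unfolding f_def by simp
    next
      case False
      obtain w where w: "w \<in> Lam'" "y \<in> F w" using y nL by blast
      have "f y = user y" using False nL unfolding f_def by simp
      then show ?thesis using user[OF w] by simp
    qed
  qed
  define Fib where "Fib w = {y\<in>?LL. f y = w}" for w
  have wFib: "w \<in> Fib w" if "w \<in> Lam'" for w using that unfolding Fib_def f_def by auto
  define Arb where "Arb w = (SOME r. well_order_on (Fib w - {w}) r)" for w
  have Arb: "Well_order (Arb w) \<and> Field (Arb w) = Fib w - {w}" for w
  proof -
    have "well_order_on (Fib w - {w}) (Arb w)" unfolding Arb_def using well_order_on by (rule someI_ex)
    then show ?thesis using well_order_on_Well_order by blast
  qed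
  define Wn where "Wn = keyR (\<lambda>i::nat. i) {0,1}"
  have Wn: "Well_order Wn \<and> Field Wn = {0,1}" unfolding Wn_def by (rule wo_key) simp
  define g where "g (w::'a seq list) y = (if y = w then (1::nat) else 0)" for w y
  define Q where "Q w = lexR Wn (g w) (\<lambda>i. if i = 1 then keyR (\<lambda>_. (0::nat)) {w} else Arb w) (Fib w)" for w
  have Q: "Well_order (Q w) \<and> Field (Q w) = Fib w" if w: "w \<in> Lam'" for w
    unfolding Q_def
  proof (rule wo_lex)
    show "Well_order Wn" using Wn by blast
    show "\<forall>x\<in>Fib w. g w x \<in> Field Wn" using Wn unfolding g_def by auto
    show "\<forall>a\<in>Field Wn. Well_order (if a = 1 then keyR (\<lambda>_. (0::nat)) {w} else Arb w) \<and>
        Field (if a = 1 then keyR (\<lambda>_. (0::nat)) {w} else Arb w) = {x\<in>Fib w. g w x = a}"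
    proof
      fix a assume "a \<in> Field Wn"
      then have a: "a = 0 \<or> a = 1" using Wn by auto
      have k1: "Well_order (keyR (\<lambda>_. (0::nat)) {w}) \<and> Field (keyR (\<lambda>_. (0::nat)) {w}) = {w}"
        by (rule wo_key) simp
      have s1: "{x\<in>Fib w. g w x = 1} = {w}" using wFib[OF w] unfolding g_def by auto
      have s0: "{x\<in>Fib w. g w x = 0} = Fib w - {w}" unfolding g_def by auto
      show "Well_order (if a = 1 then keyR (\<lambda>_. (0::nat)) {w} else Arb w) \<and>
        Field (if a = 1 then keyR (\<lambda>_. (0::nat)) {w} else Arb w) = {x\<in>Fib w. g w x = a}"
      proof (cases "a = 1")
        case True
        have e: "(if a = 1 then keyR (\<lambda>_. (0::nat)) {w} else Arb w) = keyR (\<lambda>_. (0::nat)) {w}" using True by simp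
        show ?thesis unfolding e unfolding True s1 by (rule k1)
      next
        case False
        then have a0: "a = 0" using a by simp
        have e: "(if a = 1 then keyR (\<lambda>_. (0::nat)) {w} else Arb w) = Arb w" using False by simp
        show ?thesis unfolding e unfolding a0 s0 by (rule Arb)
      qed
    qed
  qed
  have Qlast: "(y,w) \<in> Q w" if "w \<in> Lam'" "y \<in> Fib w" "y \<noteq> w" for y w
    using that wFib unfolding Q_def lexR_def Wn_def keyR_def g_def by auto
  define r where "r = lexR R f Q ?LL"
  have rwo: "Well_order r \<and> Field r = ?LL" unfolding r_def
  proof (rule wo_lex[OF R(1)])
    show "\<forall>x\<in>?LL. f x \<in> Field R" using fL R by auto
    show "\<forall>a\<in>Field R. Well_order (Q a) \<and> Field (Q a) = {x\<in>?LL. f x = a}"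
    proof
      fix a assume "a \<in> Field R"
      then have aL: "a \<in> Lam'" using R(2) by simp
      show "Well_order (Q a) \<and> Field (Q a) = {x\<in>?LL. f x = a}" using Q[OF aL] unfolding Fib_def .
    qed
  qed
  have before: "(x,eta) \<in> r" if x: "x \<in> ?LL" and eta: "eta \<in> Lam'" and fx: "(f x, eta) \<in> R" and ne: "x \<noteq> eta" for x eta
  proof (cases "f x = eta")
    case True
    have "x \<in> Fib eta" using x True unfolding Fib_def by simp
    then have "(x, eta) \<in> Q eta" using Qlast eta ne by blast
    moreover have "eta \<in> ?LL" using eta by blast
    ultimately show ?thesis using True x fLam'[OF eta] unfolding r_def lexR_def by simp
  next
    case False
    moreover have "eta \<in> ?LL" using eta by blast
    ultimately show ?thesis using x fx fLam'[OF eta] unfolding r_def lexR_def by simp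
  qed
  define goodl where "goodl eta l = (\<exists>N. \<forall>n\<ge>N. \<forall>nu\<in>Lam'. (nu,eta) \<in> R \<longrightarrow>
      (nu \<noteq> eta \<longrightarrow> restr nu l n \<noteq> restr eta l n) \<and> restr eta l n \<notin> F nu)" for eta l
  define ell where "ell y = (if y \<in> Lam' then (SOME l. l \<in> {..k} \<and> goodl y l) else 0)" for y
  have ell: "ell eta \<le> k \<and> goodl eta (ell eta)" if "eta \<in> Lam'" for eta
  proof -
    have "\<exists>l. l \<in> {..k} \<and> goodl eta l" using RB that unfolding good_def goodl_def by blast
    then have "(SOME l. l \<in> {..k} \<and> goodl eta l) \<in> {..k} \<and> goodl eta (SOME l. l \<in> {..k} \<and> goodl eta l)"
      by (rule someI_ex)
    moreover have "ell eta = (SOME l. l \<in> {..k} \<and> goodl eta l)" unfolding ell_def using that by simp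
    ultimately show ?thesis by simp
  qed
  show ?thesis unfolding free_for_def
  proof (intro exI[of _ r] exI[of _ ell] conjI ballI)
    show "Well_order r" using rwo by blast
    show "Field r = ?LL" using rwo by blast
    fix eta assume "eta \<in> Field r"
    then show "ell eta \<le> k" using ell unfolding ell_def by (cases "eta \<in> Lam'") auto
  next
    fix eta assume eta: "eta \<in> Lam'"
    have etaL: "eta \<in> Lam" using eta sub by auto
    show "F eta \<subseteq> {nu. (nu, eta) \<in> r \<and> nu \<noteq> eta} \<union>
        {restr nu m n |nu m n. (nu, eta) \<in> r \<and> nu \<noteq> eta \<and> m \<le> k}"
    proof
      fix x assume x: "x \<in> F eta"
      have xLL: "x \<in> ?LL" using x eta by auto
      have "(x, eta) \<in> r \<and> x \<noteq> eta"
      proof (cases "x \<in> Lam'")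
        case True
        then have "(x,eta) \<in> R" "x \<noteq> eta" using RA eta x by auto
        moreover have "f x = x" using fLam'[OF True] .
        ultimately show ?thesis using before[OF xLL eta] by auto
      next
        case notL': False
        show ?thesis
        proof (cases "x \<in> Lam")
          case True
          then have "f x = m0" using notL' unfolding f_def by simp
          moreover have "x \<noteq> eta" using notL' eta by auto
          ultimately show ?thesis using before[OF xLL eta] m0 eta by auto
        next
          case False
          then have "f x = user x" using notL' unfolding f_def by simp
          moreover have "(user x, eta) \<in> R" using user[OF eta x] eta x by blast
          moreover have "x \<noteq> eta" using False etaL by auto
          ultimately show ?thesis using before[OF xLL eta] by auto
        qed
      qed
      then show "x \<in> {nu. (nu, eta) \<in> r \<and> nu \<noteq> eta} \<union>
        {restr nu m n |nu m n. (nu, eta) \<in> r \<and> nu \<noteq> eta \<and> m \<le> k}" by blast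
    qed
    obtain N where N: "\<forall>n\<ge>N. \<forall>nu\<in>Lam'. (nu,eta) \<in> R \<longrightarrow>
      (nu \<noteq> eta \<longrightarrow> restr nu (ell eta) n \<noteq> restr eta (ell eta) n) \<and> restr eta (ell eta) n \<notin> F nu"
      using ell[OF eta] unfolding goodl_def by blast
    have lk: "ell eta \<le> k" using ell[OF eta] by blast
    have rR: "(f nu, eta) \<in> R" if "(nu,eta) \<in> r" for nu
    proof -
      have nuLL: "nu \<in> ?LL" using that unfolding r_def lexR_def by auto
      have fe: "f eta = eta" using fLam'[OF eta] .
      have "(f nu, eta) \<in> R \<or> f nu = eta" using that fe unfolding r_def lexR_def by auto
      then show "(f nu, eta) \<in> R" using Rrefl eta by auto
    qed
    show "\<exists>n. restr eta (ell eta) n \<notin>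
        {restr nu (ell eta) n |nu. (nu, eta) \<in> r \<and> nu \<noteq> eta \<and> nu \<in> Lam'} \<union> {nu. (nu, eta) \<in> r \<and> nu \<noteq> eta}"
    proof (intro exI[of _ N] notI)
      assume "restr eta (ell eta) N \<in>
        {restr nu (ell eta) N |nu. (nu, eta) \<in> r \<and> nu \<noteq> eta \<and> nu \<in> Lam'} \<union> {nu. (nu, eta) \<in> r \<and> nu \<noteq> eta}"
      then show False
      proof
        assume "restr eta (ell eta) N \<in> {restr nu (ell eta) N |nu. (nu, eta) \<in> r \<and> nu \<noteq> eta \<and> nu \<in> Lam'}"
        then obtain nu where nu: "restr eta (ell eta) N = restr nu (ell eta) N" "(nu, eta) \<in> r" "nu \<noteq> eta" "nu \<in> Lam'"
          by blast
        have "(f nu, eta) \<in> R" using rR nu(2) by blast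
        then have "(nu, eta) \<in> R" using fLam'[OF nu(4)] by simp
        then have "restr nu (ell eta) N \<noteq> restr eta (ell eta) N" using N nu(3,4) by blast
        then show False using nu(1) by simp
      next
        assume "restr eta (ell eta) N \<in> {nu. (nu, eta) \<in> r \<and> nu \<noteq> eta}"
        then have y: "(restr eta (ell eta) N, eta) \<in> r" by simp
        let ?y = "restr eta (ell eta) N"
        have yLL: "?y \<in> ?LL" using y unfolding r_def lexR_def by auto
        have yL: "?y \<notin> Lam" using restr_not_Lam[OF etaL lk] by blast
        then obtain w where w: "w \<in> Lam'" "?y \<in> F w" using yLL sub by auto
        have fy: "f ?y = user ?y" using yL sub unfolding f_def by auto
        have "(f ?y, eta) \<in> R" using rR y by blast
        then have "(user ?y, eta) \<in> R" using fy by simp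
        moreover have "user ?y \<in> Lam'" "?y \<in> F (user ?y)" using user[OF w] by auto
        ultimately show False using N by blast
      qed
    qed
  qed
qed

lemma all_claims:
  assumes "finitary Lam F \<or> simple k Lam F" shows "claim j"
proof (induction j)
  case 0 then show ?case using assms base_fin base_simple by blast
next
  case (Suc j) then show ?case by (rule step)
qed

end

theorem claim3p2:
  fixes k :: nat
    and S :: "'a::{wellorder, complete_linorder} set"
    and Lam :: "'a seq list set"
    and F :: "'a seq list \<Rightarrow> 'a seq list set"
  assumes "comb_param k S Lam"
    and "regressive k Lam F"
    and "finitary Lam F \<or> simple k Lam F"
  shows "\<forall>Lam'. Lam' \<subseteq> Lam \<and> le_aleph k Lam' \<longrightarrow> free_for k Lam F Lam'"
proof -
  interpret setting k S Lam F using assms(1,2) by (rule setting.intro)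
  show ?thesis
  proof (intro allI impI)
    fix Lam' assume a: "Lam' \<subseteq> Lam \<and> le_aleph k Lam'"
    have cl: "claim k" using all_claims[OF assms(3)] .
    have "\<exists>R. claimP Lam' (\<lambda>_. {..k}) R"
      using cl[unfolded claim_def, rule_format, of Lam' "\<lambda>_. {..k}"] a by simp
    then obtain R where "claimP Lam' (\<lambda>_. {..k}) R" by blast
    then show "free_for k Lam F Lam'" using final[of Lam' R] a by blast
  qed
qed


end
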